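(* Any ensemble of pairwise orthogonal pure states in $\mathbb{C}^2\otimes\mathbb{C}^2$ (sampled with uniform probabilities) that contains no more than two entangled states is two-copy distinguishable under adaptive LOCC, i.e., the unknown state can be identified with certainty from two copies by an adaptive LOCC strategy.
   Context: Two spatially separated parties (Alice holding the first qubit, Bob the second) are given copies of an unknown state drawn from a known ensemble. In an adaptive LOCC strategy each copy is addressed individually by local quantum operations and classical communication (LOCC) acting on that copy only, and the strategy used on later copies may depend on the outcomes from earlier copies. A pure state is entangled if it is not a product state. *)

theory Defs
  imports Complex_Main
begin

text \<open>Two-qubit pure (unnormalised) vectors in C^2 (x) C^2: psi a b is the amplitude of
  the basis vector |a>|b>, a = Alice's index, b = Bob's index.
  Single-qubit linear operators are 2x2 complex matrices K r c.\<close>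

type_synonym state2 = "bool \<Rightarrow> bool \<Rightarrow> complex"
type_synonym qop = "bool \<Rightarrow> bool \<Rightarrow> complex"

definition inner2 :: "state2 \<Rightarrow> state2 \<Rightarrow> complex" where
  "inner2 \<phi> \<psi> = (\<Sum>a\<in>UNIV. \<Sum>b\<in>UNIV. cnj (\<phi> a b) * \<psi> a b)"

definition is_product :: "state2 \<Rightarrow> bool" where
  "is_product \<psi> \<longleftrightarrow> (\<exists>u v :: bool \<Rightarrow> complex. \<psi> = (\<lambda>a b. u a * v b))"

definition entangled :: "state2 \<Rightarrow> bool" where
  "entangled \<psi> \<longleftrightarrow> \<not> is_product \<psi>"

datatype party = Alice | Bob

definition apply_local :: "party \<Rightarrow> qop \<Rightarrow> state2 \<Rightarrow> state2" where
  "apply_local p K \<psi> = (case p of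
      Alice \<Rightarrow> (\<lambda>a b. \<Sum>a'\<in>UNIV. K a a' * \<psi> a' b)
    | Bob \<Rightarrow> (\<lambda>a b. \<Sum>b'\<in>UNIV. K b b' * \<psi> a b'))"

definition complete_meas :: "qop list \<Rightarrow> bool" where
  "complete_meas Ks \<longleftrightarrow> (\<forall>r c. (\<Sum>K\<leftarrow>Ks. \<Sum>k\<in>UNIV. cnj (K k r) * K k c) = (if r = c then 1 else 0))"

text \<open>A finite-round LOCC protocol on one copy: a tree in which, at each node, one party
  performs a local measurement (outcome j with Kraus operator K_j), broadcasts the outcome,
  and the protocol continues with the subtree attached to that outcome.\<close>
datatype 'a prot = Leaf 'a | Node party "(qop \<times> 'a prot) list"

inductive valid_prot :: "('a \<Rightarrow> bool) \<Rightarrow> 'a prot \<Rightarrow> bool" for P where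
  leaf: "P x \<Longrightarrow> valid_prot P (Leaf x)"
| node: "complete_meas (map fst kts) \<Longrightarrow> list_all (\<lambda>kt. valid_prot P (snd kt)) kts
          \<Longrightarrow> valid_prot P (Node p kts)"

text \<open>reaches t psi x: starting from psi, the leaf with label x is reached with nonzero
  probability (the unnormalised post-measurement vector at that leaf is nonzero).\<close>
inductive reaches :: "'a prot \<Rightarrow> state2 \<Rightarrow> 'a \<Rightarrow> bool" where
  leaf: "\<psi> \<noteq> (\<lambda>_ _. 0) \<Longrightarrow> reaches (Leaf x) \<psi> x"
| node: "(K, t) \<in> set kts \<Longrightarrow> reaches t (apply_local p K \<psi>) x \<Longrightarrow> reaches (Node p kts) \<psi> x"

text \<open>Adaptive two-copy LOCC strategy: an LOCC protocol on copy 1 whose leaves are LOCC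
  protocols on copy 2, whose leaves are the guessed index.\<close>
definition valid_strategy2 :: "nat prot prot \<Rightarrow> bool" where
  "valid_strategy2 S \<longleftrightarrow> valid_prot (valid_prot (\<lambda>_. True)) S"

definition two_copy_distinguishable :: "nat \<Rightarrow> (nat \<Rightarrow> state2) \<Rightarrow> bool" where
  "two_copy_distinguishable n \<psi> \<longleftrightarrow>
     (\<exists>S. valid_strategy2 S \<and>
        (\<forall>i<n. \<forall>T g. reaches S (\<psi> i) T \<and> reaches T (\<psi> i) g \<longrightarrow> g = i))"

end

theory Submission
  imports Defs
begin


definition ip :: "(bool \<Rightarrow> complex) \<Rightarrow> (bool \<Rightarrow> complex) \<Rightarrow> complex" where
  "ip x y = (\<Sum>k\<in>UNIV. cnj (x k) * y k)"

definition perp :: "(bool \<Rightarrow> complex) \<Rightarrow> (bool \<Rightarrow> complex)" where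
  "perp x = (\<lambda>k. if k then cnj (x False) else - cnj (x True))"

definition proj :: "(bool \<Rightarrow> complex) \<Rightarrow> qop" where
  "proj w = (\<lambda>r c. w r * cnj (w c))"

definition prodv :: "party \<Rightarrow> (bool \<Rightarrow> complex) \<Rightarrow> (bool \<Rightarrow> complex) \<Rightarrow> state2" where
  "prodv p w f = (case p of Alice \<Rightarrow> (\<lambda>a b. w a * f b) | Bob \<Rightarrow> (\<lambda>a b. f a * w b))"

fun other :: "party \<Rightarrow> party" where
  "other Alice = Bob" | "other Bob = Alice"

definition TS :: "party \<Rightarrow> (bool \<Rightarrow> complex) \<Rightarrow> (bool \<Rightarrow> complex) \<Rightarrow> (bool \<Rightarrow> complex)
   \<Rightarrow> 'a \<Rightarrow> 'a \<Rightarrow> 'a \<Rightarrow> 'a \<Rightarrow> 'a prot" where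
  "TS p w f1 f2 l11 l12 l21 l22 = Node p
     [(proj w, Node (other p) [(proj f1, Leaf l11), (proj (perp f1), Leaf l12)]),
      (proj (perp w), Node (other p) [(proj f2, Leaf l21), (proj (perp f2), Leaf l22)])]"

lemma ip_expand: "ip x y = cnj (x False) * y False + cnj (x True) * y True"
  by (simp add: ip_def UNIV_bool)

lemma inner2_expand: "inner2 x y = cnj (x False False) * y False False + cnj (x False True) * y False True
   + cnj (x True False) * y True False + cnj (x True True) * y True True"
  by (simp add: inner2_def UNIV_bool)

lemma complete_proj:
  assumes "ip w w = 1" shows "complete_meas [proj w, proj (perp w)]"
proof -
  have u: "cnj (w False) * w False + cnj (w True) * w True = 1" using assms by (simp add: ip_expand)
  show ?thesis unfolding complete_meas_def
  proof (intro allI)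
    fix r c
    show "(\<Sum>K\<leftarrow>[proj w, proj (perp w)]. \<Sum>k\<in>UNIV. cnj (K k r) * K k c) = (if r = c then 1 else 0)"
      using u by (cases r; cases c; simp add: UNIV_bool proj_def perp_def algebra_simps) algebra+
  qed
qed

lemma apply2:
  "apply_local (other p) (proj f) (apply_local p (proj w) \<psi>) = (\<lambda>a b. prodv p w f a b * inner2 (prodv p w f) \<psi>)"
  by (cases p) (auto simp: apply_local_def proj_def prodv_def inner2_expand UNIV_bool algebra_simps intro!: ext)


lemma valid_TS:
  assumes "ip w w = 1" "ip f1 f1 = 1" "ip f2 f2 = 1" "P l11" "P l12" "P l21" "P l22"
  shows "valid_prot P (TS p w f1 f2 l11 l12 l21 l22)"
  unfolding TS_def
  by (intro valid_prot.intros complete_proj assms) (simp_all add: valid_prot.intros assms complete_proj)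

lemma reaches_leaf: "reaches (Leaf y) \<psi> x \<Longrightarrow> x = y \<and> \<psi> \<noteq> (\<lambda>_ _. 0)"
  by (erule reaches.cases) auto

lemma reaches_node: "reaches (Node p kts) \<psi> x \<Longrightarrow> \<exists>K t. (K, t) \<in> set kts \<and> reaches t (apply_local p K \<psi>) x"
  by (erule reaches.cases) auto

lemma scaled_nz: "(\<lambda>a b. F a b * c) \<noteq> (\<lambda>_ _. (0::complex)) \<Longrightarrow> c \<noteq> 0"
  by auto

lemma reaches_TS:
  assumes "reaches (TS p w f1 f2 l11 l12 l21 l22) \<psi> x"
  shows "(inner2 (prodv p w f1) \<psi> \<noteq> 0 \<and> x = l11) \<or> (inner2 (prodv p w (perp f1)) \<psi> \<noteq> 0 \<and> x = l12)
       \<or> (inner2 (prodv p (perp w) f2) \<psi> \<noteq> 0 \<and> x = l21) \<or> (inner2 (prodv p (perp w) (perp f2)) \<psi> \<noteq> 0 \<and> x = l22)"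
proof -
  from reaches_node[OF assms[unfolded TS_def]] obtain K t where
    Kt: "(K, t) \<in> set [(proj w, Node (other p) [(proj f1, Leaf l11), (proj (perp f1), Leaf l12)]),
      (proj (perp w), Node (other p) [(proj f2, Leaf l21), (proj (perp f2), Leaf l22)])]"
    and r: "reaches t (apply_local p K \<psi>) x" by blast
  show ?thesis
  proof (cases "K = proj w \<and> t = Node (other p) [(proj f1, Leaf l11), (proj (perp f1), Leaf l12)]")
    case True
    with r have "reaches (Node (other p) [(proj f1, Leaf l11), (proj (perp f1), Leaf l12)]) (apply_local p (proj w) \<psi>) x" by simp
    from reaches_node[OF this] obtain K' t' where K't': "(K', t') \<in> set [(proj f1, Leaf l11), (proj (perp f1), Leaf l12)]"
      and r': "reaches t' (apply_local (other p) K' (apply_local p (proj w) \<psi>)) x"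
      by blast
    from K't' r' show ?thesis by (auto dest!: reaches_leaf simp: apply2)
  next
    case False
    with Kt have "K = proj (perp w) \<and> t = Node (other p) [(proj f2, Leaf l21), (proj (perp f2), Leaf l22)]" by auto
    with r have "reaches (Node (other p) [(proj f2, Leaf l21), (proj (perp f2), Leaf l22)]) (apply_local p (proj (perp w)) \<psi>) x" by simp
    from reaches_node[OF this] obtain K' t' where K't': "(K', t') \<in> set [(proj f2, Leaf l21), (proj (perp f2), Leaf l22)]"
      and r': "reaches t' (apply_local (other p) K' (apply_local p (proj (perp w)) \<psi>)) x"
      by blast
    from K't' r' show ?thesis by (auto dest!: reaches_leaf simp: apply2)
  qed
qed




lemma real3:
  fixes u1 u2 u3 v1 v2 v3 :: real
  shows "\<exists>s1 s2 s3. (s1 \<noteq> 0 \<or> s2 \<noteq> 0 \<or> s3 \<noteq> 0) \<and> s1*u1+s2*u2+s3*u3 = 0 \<and> s1*v1+s2*v2+s3*v3 = 0"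
proof -
  define c1 where "c1 = u2*v3 - u3*v2"
  define c2 where "c2 = u3*v1 - u1*v3"
  define c3 where "c3 = u1*v2 - u2*v1"
  show ?thesis
  proof (cases "c1 \<noteq> 0 \<or> c2 \<noteq> 0 \<or> c3 \<noteq> 0")
    case True
    show ?thesis
      by (rule exI[of _ c1], rule exI[of _ c2], rule exI[of _ c3])
         (use True in \<open>simp add: c1_def c2_def c3_def algebra_simps\<close>)
  next
    case False
    then have c: "c1 = 0" "c2 = 0" "c3 = 0" by auto
    show ?thesis
    proof (cases "u2 \<noteq> 0 \<or> u3 \<noteq> 0")
      case True
      show ?thesis
        by (rule exI[of _ 0], rule exI[of _ u3], rule exI[of _ "-u2"])
           (use True c in \<open>auto simp: c1_def algebra_simps\<close>)
    next
      case F2: False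
      show ?thesis
      proof (cases "u1 \<noteq> 0")
        case True
        show ?thesis
          by (rule exI[of _ 0], rule exI[of _ 0], rule exI[of _ u1])
             (use True c F2 in \<open>simp add: c2_def algebra_simps\<close>)
      next
        case F3: False
        show ?thesis
        proof (cases "v2 \<noteq> 0 \<or> v3 \<noteq> 0")
          case True
          show ?thesis
            by (rule exI[of _ 0], rule exI[of _ v3], rule exI[of _ "-v2"])
               (use True F2 F3 in \<open>auto simp: algebra_simps\<close>)
        next
          case False
          show ?thesis
            by (rule exI[of _ 0], rule exI[of _ 1], rule exI[of _ 0])
               (use False F2 F3 in \<open>simp\<close>)
        qed
      qed
    qed
  qed
qed

lemma complex3:
  fixes X Y Z :: complex
  shows "\<exists>s1 s2 s3 :: real. (s1 \<noteq> 0 \<or> s2 \<noteq> 0 \<or> s3 \<noteq> 0) \<and> of_real s1 * X + of_real s2 * Y + of_real s3 * Z = 0"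
proof -
  obtain s1 s2 s3 where s: "s1 \<noteq> 0 \<or> s2 \<noteq> 0 \<or> s3 \<noteq> 0"
    "s1 * Re X + s2 * Re Y + s3 * Re Z = 0" "s1 * Im X + s2 * Im Y + s3 * Im Z = 0"
    using real3 by blast
  have "of_real s1 * X + of_real s2 * Y + of_real s3 * Z = 0"
    using s(2,3) by (simp add: complex_eq_iff)
  with s(1) show ?thesis by blast
qed

definition G :: "complex \<Rightarrow> complex \<Rightarrow> complex \<Rightarrow> complex \<Rightarrow> (bool \<Rightarrow> complex) \<Rightarrow> complex" where
  "G A B C D w = w False * cnj (w False) * A + w False * cnj (w True) * B + w True * cnj (w False) * C + w True * cnj (w True) * D"

lemma G_perp: "A + D = 0 \<Longrightarrow> G A B C D (perp w) = - G A B C D w"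
  unfolding G_def perp_def by simp algebra

lemma G_scale: "G A B C D (\<lambda>k. c * w k) = (c * cnj c) * G A B C D w"
  unfolding G_def by (simp add: algebra_simps)

lemma G_zero_exists:
  assumes "A + D = 0"
  shows "\<exists>w. ip w w \<noteq> 0 \<and> G A B C D w = 0"
proof -
  obtain s1 s2 s3 :: real where s: "s1 \<noteq> 0 \<or> s2 \<noteq> 0 \<or> s3 \<noteq> 0"
    and L: "of_real s1 * (B + C) + of_real s2 * (\<i> * (C - B)) + of_real s3 * (2 * A) = 0"
    using complex3 by blast
  define r where "r = sqrt (s1\<^sup>2 + s2\<^sup>2 + s3\<^sup>2)"
  have r2: "r\<^sup>2 = s1\<^sup>2 + s2\<^sup>2 + s3\<^sup>2" unfolding r_def by simp
  have r0: "r \<ge> 0" unfolding r_def by simp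
  show ?thesis
  proof (cases "r + s3 = 0")
    case False
    define w where "w = (\<lambda>k. if k then Complex s1 s2 else complex_of_real (r + s3))"
    have "ip w w \<noteq> 0"
    proof
      assume "ip w w = 0"
      then have "cnj (w False) * w False + cnj (w True) * w True = 0" by (simp add: ip_expand)
      then have "(r + s3)^2 + (s1^2 + s2^2) = 0"
        unfolding w_def by (simp add: complex_eq_iff power2_eq_square)
      then show False using False
        by (smt (verit) power2_less_eq_zero_iff sum_power2_eq_zero_iff zero_le_power2)
    qed
    moreover have "G A B C D w = 0"
    proof -
      have e: "(r+s3)^2 - (s1^2 + s2^2) = (r + s3) * (2 * s3)" using r2 by (simp add: algebra_simps power2_eq_square)
      have cs: "Complex s1 s2 = of_real s1 + \<i> * of_real s2" by (simp add: complex_eq_iff)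
      have "G A B C D w = of_real ((r+s3)^2 - (s1^2 + s2^2)) * A
          + of_real (r + s3) * ((of_real s1 - \<i> * of_real s2) * B + (of_real s1 + \<i> * of_real s2) * C)"
        using assms unfolding G_def w_def cs
        by (simp add: algebra_simps power2_eq_square) algebra
      also have "\<dots> = of_real (r + s3) * (of_real s1 * (B + C) + of_real s2 * (\<i> * (C - B)) + of_real s3 * (2 * A))"
        unfolding e by (simp add: algebra_simps)
      also have "\<dots> = 0" using L by simp
      finally show ?thesis .
    qed
    ultimately show ?thesis by blast
  next
    case True
    then have "s3 = - r" by simp
    then have "s1 = 0 \<and> s2 = 0" using r2 by (simp add: power2_eq_square)
    then have "s3 \<noteq> 0" using s by simp
    with L \<open>s1 = 0 \<and> s2 = 0\<close> have "A = 0" by simp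
    then have "D = 0" using assms by simp
    define w where "w = (\<lambda>k::bool. if k then (1::complex) else 0)"
    have "ip w w \<noteq> 0" "G A B C D w = 0" unfolding w_def ip_expand G_def using \<open>D = 0\<close> by simp_all
    then show ?thesis by blast
  qed
qed



lemma ip_scale_left: "ip (\<lambda>k. c * x k) y = cnj c * ip x y"
  by (simp add: ip_expand algebra_simps)
lemma ip_scale_right: "ip x (\<lambda>k. c * y k) = c * ip x y"
  by (simp add: ip_expand algebra_simps)
lemma ip_perp_self: "ip (perp x) x = 0"
  by (simp add: ip_expand perp_def algebra_simps)
lemma ip_perp_perp: "ip (perp x) (perp x) = ip x x"
  by (simp add: ip_expand perp_def algebra_simps)
lemma perp_scale: "perp (\<lambda>k. c * x k) = (\<lambda>k. cnj c * perp x k)"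
  by (auto simp: perp_def)
lemma cnj_sq: "cnj z * z = of_real ((cmod z)\<^sup>2)"
  by (subst complex_norm_square) (simp add: mult.commute)
lemma ip_self: "ip x x = of_real ((cmod (x False))\<^sup>2 + (cmod (x True))\<^sup>2)"
  unfolding ip_expand cnj_sq of_real_add ..
lemma ip_zero_right: "ip z (\<lambda>_. 0) = 0"
  by (simp add: ip_expand)
lemma ip_self_zero:
  assumes "ip x x = 0" shows "x k = 0"
proof -
  have "(cmod (x False))\<^sup>2 + (cmod (x True))\<^sup>2 = 0" using assms ip_self by (metis of_real_eq_0_iff)
  then show ?thesis by (cases k) (simp_all add: add_nonneg_eq_0_iff)
qed

lemma normalize:
  assumes "ip x x \<noteq> 0" shows "\<exists>c. ip (\<lambda>k. c * x k) (\<lambda>k. c * x k) = 1"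
proof -
  define t where "t = (cmod (x False))\<^sup>2 + (cmod (x True))\<^sup>2"
  have xt: "ip x x = of_real t" unfolding t_def by (rule ip_self)
  have "t \<ge> 0" unfolding t_def by simp
  moreover have "t \<noteq> 0" using assms xt by auto
  ultimately have "t > 0" by simp
  define c where "c = complex_of_real (1 / sqrt t)"
  have "ip (\<lambda>k. c * x k) (\<lambda>k. c * x k) = cnj c * c * of_real t"
    by (simp add: ip_scale_left ip_scale_right xt)
  also have "\<dots> = 1" unfolding c_def using \<open>t > 0\<close>
    by (simp flip: of_real_mult)
  finally show ?thesis by blast
qed

lemma orth_choice:
  assumes "ip x y = 0"
  shows "\<exists>f. ip f f = 1 \<and> ip f y = 0 \<and> ip (perp f) x = 0"
proof (cases "ip x x = 0")
  case False
  from normalize[OF False] obtain c where c: "ip (\<lambda>k. c * x k) (\<lambda>k. c * x k) = 1" by blast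
  show ?thesis
    by (rule exI[of _ "\<lambda>k. c * x k"])
       (simp add: c ip_scale_left perp_scale assms ip_perp_self)
next
  case True
  then have x0: "x = (\<lambda>_. 0)" using ip_self_zero by blast
  show ?thesis
  proof (cases "ip y y = 0")
    case False
    then have "ip (perp y) (perp y) \<noteq> 0" by (simp add: ip_perp_perp)
    from normalize[OF this] obtain c where c: "ip (\<lambda>k. c * perp y k) (\<lambda>k. c * perp y k) = 1" by blast
    show ?thesis
      by (rule exI[of _ "\<lambda>k. c * perp y k"])
         (simp add: c ip_scale_left ip_perp_self x0 ip_zero_right)
  next
    case True
    then have y0: "y = (\<lambda>_. 0)" using ip_self_zero by blast
    show ?thesis
      by (rule exI[of _ "\<lambda>k. if k then 0 else 1"]) (simp add: x0 y0 ip_zero_right, simp add: ip_expand)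
  qed
qed

definition condA :: "(bool \<Rightarrow> complex) \<Rightarrow> state2 \<Rightarrow> (bool \<Rightarrow> complex)" where
  "condA w \<phi> = (\<lambda>b. \<Sum>a\<in>UNIV. cnj (w a) * \<phi> a b)"

lemma inner2_prodA: "inner2 (prodv Alice w f) \<phi> = ip f (condA w \<phi>)"
  by (simp add: inner2_expand ip_expand prodv_def condA_def UNIV_bool algebra_simps)

lemma condA_G: "ip (condA w P) (condA w Q) = G
   (\<Sum>b\<in>UNIV. cnj (P False b) * Q False b) (\<Sum>b\<in>UNIV. cnj (P False b) * Q True b)
   (\<Sum>b\<in>UNIV. cnj (P True b) * Q False b) (\<Sum>b\<in>UNIV. cnj (P True b) * Q True b) w"
  by (simp add: ip_expand G_def condA_def UNIV_bool algebra_simps)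

lemma inner2_AD: "inner2 P Q = (\<Sum>b\<in>UNIV. cnj (P False b) * Q False b) + (\<Sum>b\<in>UNIV. cnj (P True b) * Q True b)"
  by (simp add: inner2_expand UNIV_bool algebra_simps)

lemma walgate_basis:
  assumes "inner2 P Q = 0"
  shows "\<exists>w. ip w w = 1 \<and> ip (condA w P) (condA w Q) = 0 \<and> ip (condA (perp w) P) (condA (perp w) Q) = 0"
proof -
  let ?A = "\<Sum>b\<in>UNIV. cnj (P False b) * Q False b" and ?D = "\<Sum>b\<in>UNIV. cnj (P True b) * Q True b"
  have AD: "?A + ?D = 0" using assms by (simp add: inner2_AD)
  from G_zero_exists[OF AD] obtain w where w: "ip w w \<noteq> 0"
    "G ?A (\<Sum>b\<in>UNIV. cnj (P False b) * Q True b) (\<Sum>b\<in>UNIV. cnj (P True b) * Q False b) ?D w = 0"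
    by blast
  from normalize[OF w(1)] obtain c where c: "ip (\<lambda>k. c * w k) (\<lambda>k. c * w k) = 1" by blast
  show ?thesis
    by (rule exI[of _ "\<lambda>k. c * w k"])
       (simp add: c condA_G G_perp[OF AD] G_scale w(2))
qed

lemma walgate':
  assumes "inner2 \<phi>1 \<phi>2 = 0"
  shows "\<exists>T. valid_prot (\<lambda>_. True) T \<and> (\<forall>g. reaches T \<phi>1 g \<longrightarrow> g = i) \<and> (\<forall>g. reaches T \<phi>2 g \<longrightarrow> g = (j::nat))"
proof -
  obtain w where w: "ip w w = 1" "ip (condA w \<phi>1) (condA w \<phi>2) = 0"
    "ip (condA (perp w) \<phi>1) (condA (perp w) \<phi>2) = 0"
    using walgate_basis[OF assms] by blast
  obtain f1 where f1: "ip f1 f1 = 1" "ip f1 (condA w \<phi>2) = 0" "ip (perp f1) (condA w \<phi>1) = 0"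
    using orth_choice[OF w(2)] by blast
  obtain f2 where f2: "ip f2 f2 = 1" "ip f2 (condA (perp w) \<phi>2) = 0" "ip (perp f2) (condA (perp w) \<phi>1) = 0"
    using orth_choice[OF w(3)] by blast
  let ?T = "TS Alice w f1 f2 i j i j"
  have "valid_prot (\<lambda>_. True) ?T" by (rule valid_TS) (simp_all add: w f1 f2)
  moreover have "\<forall>g. reaches ?T \<phi>1 g \<longrightarrow> g = i"
    using reaches_TS[of Alice w f1 f2 i j i j \<phi>1] f1 f2 by (auto simp: inner2_prodA)
  moreover have "\<forall>g. reaches ?T \<phi>2 g \<longrightarrow> g = j"
    using reaches_TS[of Alice w f1 f2 i j i j \<phi>2] f1 f2 by (auto simp: inner2_prodA)
  ultimately show ?thesis by blast
qed

lemma copy2: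
  fixes n :: nat and \<psi> :: "nat \<Rightarrow> state2"
  assumes orth: "\<forall>i<n. \<forall>j<n. i \<noteq> j \<longrightarrow> inner2 (\<psi> i) (\<psi> j) = 0"
    and C: "C \<subseteq> {..<n}" "card C \<le> 2"
  shows "\<exists>T. valid_prot (\<lambda>_. True) T \<and> (\<forall>i\<in>C. \<forall>g. reaches T (\<psi> i) g \<longrightarrow> g = i)"
proof -
  have fin: "finite C" by (rule finite_subset[OF C(1)]) simp
  have "card C = 0 \<or> card C = 1 \<or> card C = 2" using C(2) by arith
  then consider "card C = 0" | "card C = 1" | "card C = 2" by argo
  then show ?thesis
  proof cases
    case 1
    then have "C = {}" using fin by simp
    then show ?thesis by (intro exI[of _ "Leaf 0"]) (simp add: valid_prot.leaf)
  next
    case 2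
    then obtain x where "C = {x}" by (rule card_1_singletonE)
    then show ?thesis by (intro exI[of _ "Leaf x"]) (simp add: valid_prot.leaf reaches_leaf)
  next
    case 3
    then obtain x y where xy: "C = {x, y}" "x \<noteq> y" by (meson card_2_iff)
    have "x < n" "y < n" using C(1) xy by auto
    then have "inner2 (\<psi> x) (\<psi> y) = 0" using orth xy by blast
    from walgate'[OF this, where i=x and j=y] obtain T where T: "valid_prot (\<lambda>_. True) T"
      "\<forall>g. reaches T (\<psi> x) g \<longrightarrow> g = x" "\<forall>g. reaches T (\<psi> y) g \<longrightarrow> g = y" by blast
    show ?thesis by (intro exI[of _ T]) (simp add: xy T)
  qed
qed

lemma reduction:
  fixes n :: nat and \<psi> :: "nat \<Rightarrow> state2"
  assumes orth: "\<forall>i<n. \<forall>j<n. i \<noteq> j \<longrightarrow> inner2 (\<psi> i) (\<psi> j) = 0"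
    and u: "ip w w = 1" "ip f1 f1 = 1" "ip f2 f2 = 1"
    and c1: "card {j. j < n \<and> inner2 (prodv p w f1) (\<psi> j) \<noteq> 0} \<le> 2"
    and c2: "card {j. j < n \<and> inner2 (prodv p w (perp f1)) (\<psi> j) \<noteq> 0} \<le> 2"
    and c3: "card {j. j < n \<and> inner2 (prodv p (perp w) f2) (\<psi> j) \<noteq> 0} \<le> 2"
    and c4: "card {j. j < n \<and> inner2 (prodv p (perp w) (perp f2)) (\<psi> j) \<noteq> 0} \<le> 2"
  shows "two_copy_distinguishable n \<psi>"
proof -
  have sub: "{j. j < n \<and> Q j} \<subseteq> {..<n}" for Q by auto
  obtain T11 where T11: "valid_prot (\<lambda>_. True) T11"
    "\<forall>i\<in>{j. j < n \<and> inner2 (prodv p w f1) (\<psi> j) \<noteq> 0}. \<forall>g. reaches T11 (\<psi> i) g \<longrightarrow> g = i"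
    using copy2[OF orth sub c1] by blast
  obtain T12 where T12: "valid_prot (\<lambda>_. True) T12"
    "\<forall>i\<in>{j. j < n \<and> inner2 (prodv p w (perp f1)) (\<psi> j) \<noteq> 0}. \<forall>g. reaches T12 (\<psi> i) g \<longrightarrow> g = i"
    using copy2[OF orth sub c2] by blast
  obtain T21 where T21: "valid_prot (\<lambda>_. True) T21"
    "\<forall>i\<in>{j. j < n \<and> inner2 (prodv p (perp w) f2) (\<psi> j) \<noteq> 0}. \<forall>g. reaches T21 (\<psi> i) g \<longrightarrow> g = i"
    using copy2[OF orth sub c3] by blast
  obtain T22 where T22: "valid_prot (\<lambda>_. True) T22"
    "\<forall>i\<in>{j. j < n \<and> inner2 (prodv p (perp w) (perp f2)) (\<psi> j) \<noteq> 0}. \<forall>g. reaches T22 (\<psi> i) g \<longrightarrow> g = i"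
    using copy2[OF orth sub c4] by blast
  let ?S = "TS p w f1 f2 T11 T12 T21 T22"
  have "valid_strategy2 ?S" unfolding valid_strategy2_def
    by (rule valid_TS[where P="valid_prot (\<lambda>_. True)", OF u T11(1) T12(1) T21(1) T22(1)])
  moreover have "\<forall>i<n. \<forall>T g. reaches ?S (\<psi> i) T \<and> reaches T (\<psi> i) g \<longrightarrow> g = i"
  proof (intro allI impI)
    fix i T g assume i: "i < n" and r: "reaches ?S (\<psi> i) T \<and> reaches T (\<psi> i) g"
    from reaches_TS[OF r[THEN conjunct1]] r i T11(2) T12(2) T21(2) T22(2) show "g = i" by auto
  qed
  ultimately show ?thesis unfolding two_copy_distinguishable_def by blast
qed



lemma inner2_prod: "inner2 (prodv p a b) (prodv p c d) = ip a c * ip b d"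
  by (cases p) (simp_all add: inner2_expand ip_expand prodv_def algebra_simps)

lemma inner2_scale_left: "inner2 (\<lambda>a b. c * x a b) y = cnj c * inner2 x y"
  by (simp add: inner2_expand algebra_simps)

lemma inner2_cnj: "inner2 x y = cnj (inner2 y x)"
  by (simp add: inner2_expand)

lemma inner2_comb_right:
  "inner2 x (\<lambda>a b. \<alpha> * e1 a b + \<beta> * e2 a b) = \<alpha> * inner2 x e1 + \<beta> * inner2 x e2"
  by (simp add: inner2_expand algebra_simps)

lemma prodv_scale_left: "prodv p (\<lambda>k. c * w k) f = (\<lambda>a b. c * prodv p w f a b)"
  by (cases p) (auto simp: prodv_def algebra_simps)

lemma ip_perp_self': "ip x (perp x) = 0"
  by (simp add: ip_expand perp_def algebra_simps)

lemma res2: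
  assumes "ip u u = 1"
  shows "x = (\<lambda>k. ip u x * u k + ip (perp u) x * perp u k)"
proof
  fix k
  have h: "cnj (u False) * u False + cnj (u True) * u True = 1" using assms by (simp add: ip_expand)
  show "x k = ip u x * u k + ip (perp u) x * perp u k"
    using h by (cases k) (simp_all add: ip_expand perp_def algebra_simps; algebra)+
qed

definition cond :: "party \<Rightarrow> (bool \<Rightarrow> complex) \<Rightarrow> state2 \<Rightarrow> (bool \<Rightarrow> complex)" where
  "cond p w x = (case p of Alice \<Rightarrow> (\<lambda>b. \<Sum>a\<in>UNIV. cnj (w a) * x a b) | Bob \<Rightarrow> (\<lambda>a. \<Sum>b\<in>UNIV. cnj (w b) * x a b))"

lemma inner2_cond: "inner2 (prodv p w f) x = ip f (cond p w x)"
  by (cases p) (simp_all add: inner2_expand ip_expand prodv_def cond_def UNIV_bool algebra_simps)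

lemma res_cond:
  assumes "ip u u = 1"
  shows "x = (\<lambda>a b. prodv p u (cond p u x) a b + prodv p (perp u) (cond p (perp u) x) a b)"
proof (intro ext)
  fix a b
  show "x a b = prodv p u (cond p u x) a b + prodv p (perp u) (cond p (perp u) x) a b"
  proof (cases p)
    case Alice
    have "(\<lambda>a. x a b) a = ip u (\<lambda>a. x a b) * u a + ip (perp u) (\<lambda>a. x a b) * perp u a"
      using fun_cong[OF res2[OF assms, of "\<lambda>a. x a b"], of a] by simp
    then show ?thesis using Alice by (simp add: prodv_def cond_def ip_def mult.commute)
  next
    case Bob
    have "(\<lambda>b. x a b) b = ip u (\<lambda>b. x a b) * u b + ip (perp u) (\<lambda>b. x a b) * perp u b"
      using fun_cong[OF res2[OF assms, of "\<lambda>b. x a b"], of b] by simp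
    then show ?thesis using Bob by (simp add: prodv_def cond_def ip_def mult.commute)
  qed
qed

lemma prodv_comb_right: "prodv p w (\<lambda>k. \<alpha> * f k + \<beta> * g k) = (\<lambda>a b. \<alpha> * prodv p w f a b + \<beta> * prodv p w g a b)"
  by (cases p) (auto simp: prodv_def algebra_simps)

lemma res4:
  assumes "ip u u = 1" "ip v v = 1" "ip v' v' = 1"
  shows "x = (\<lambda>a b. inner2 (prodv p u v) x * prodv p u v a b + inner2 (prodv p u (perp v)) x * prodv p u (perp v) a b
     + inner2 (prodv p (perp u) v') x * prodv p (perp u) v' a b + inner2 (prodv p (perp u) (perp v')) x * prodv p (perp u) (perp v') a b)"
proof -
  have 1: "cond p u x = (\<lambda>k. ip v (cond p u x) * v k + ip (perp v) (cond p u x) * perp v k)"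
    by (rule res2[OF assms(2)])
  have 2: "cond p (perp u) x = (\<lambda>k. ip v' (cond p (perp u) x) * v' k + ip (perp v') (cond p (perp u) x) * perp v' k)"
    by (rule res2[OF assms(3)])
  have "x = (\<lambda>a b. prodv p u (cond p u x) a b + prodv p (perp u) (cond p (perp u) x) a b)"
    by (rule res_cond[OF assms(1)])
  also have "\<dots> = (\<lambda>a b. prodv p u (\<lambda>k. ip v (cond p u x) * v k + ip (perp v) (cond p u x) * perp v k) a b
      + prodv p (perp u) (\<lambda>k. ip v' (cond p (perp u) x) * v' k + ip (perp v') (cond p (perp u) x) * perp v' k) a b)"
    using 1 2 by simp
  also have "\<dots> = (\<lambda>a b. inner2 (prodv p u v) x * prodv p u v a b + inner2 (prodv p u (perp v)) x * prodv p u (perp v) a b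
     + inner2 (prodv p (perp u) v') x * prodv p (perp u) v' a b + inner2 (prodv p (perp u) (perp v')) x * prodv p (perp u) (perp v') a b)"
    unfolding prodv_comb_right inner2_cond by (simp add: algebra_simps)
  finally show ?thesis .
qed



lemma three_orth:
  assumes "ip a a = 1" "ip b b = 1" "ip c c = 1" "ip a b = 0" "ip a c = 0" "ip b c = 0"
  shows False
proof -
  have b: "b = (\<lambda>k. ip (perp a) b * perp a k)"
    using res2[OF assms(1), of b] assms(4) by simp
  have c: "c = (\<lambda>k. ip (perp a) c * perp a k)"
    using res2[OF assms(1), of c] assms(5) by simp
  have pa: "ip (perp a) (perp a) = 1" using assms(1) by (simp add: ip_perp_perp)
  have "ip b b = cnj (ip (perp a) b) * ip (perp a) b"
    by (subst b, subst b) (simp add: ip_scale_left ip_scale_right pa)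
  then have l: "ip (perp a) b \<noteq> 0" using assms(2) by auto
  have "ip b c = cnj (ip (perp a) b) * ip (perp a) c"
    by (subst b, subst c) (simp add: ip_scale_left ip_scale_right pa)
  then have "ip (perp a) c = 0" using l assms(6) by simp
  then have "c = (\<lambda>_. 0)" using c by simp
  then show False using assms(3) by (simp add: ip_zero_right)
qed

lemma dim2:
  fixes n :: nat and \<psi> :: "nat \<Rightarrow> state2"
  assumes normalized: "\<forall>i<n. inner2 (\<psi> i) (\<psi> i) = 1"
    and orth: "\<forall>i<n. \<forall>j<n. i \<noteq> j \<longrightarrow> inner2 (\<psi> i) (\<psi> j) = 0"
    and un: "ip u u = 1" "ip v v = 1" "ip v' v' = 1"
    and R: "R \<subseteq> {..<n}"
    and z: "\<forall>j\<in>R. inner2 (prodv p u v) (\<psi> j) = 0 \<and> inner2 (prodv p (perp u) v') (\<psi> j) = 0"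
  shows "card R \<le> 2"
proof (rule ccontr)
  assume "\<not> card R \<le> 2"
  then have "3 \<le> card R" by simp
  then obtain S where S: "S \<subseteq> R" "card S = 3" using obtain_subset_with_card_n by metis
  then obtain x y w where xyw: "S = {x, y, w}" "x \<noteq> y" "y \<noteq> w" "x \<noteq> w" by (auto simp: card_3_iff)
  let ?e1 = "prodv p u (perp v)" and ?e2 = "prodv p (perp u) (perp v')"
  define co where "co j = (\<lambda>k. if k then inner2 ?e2 (\<psi> j) else inner2 ?e1 (\<psi> j))" for j
  have rep: "\<psi> j = (\<lambda>a b. inner2 ?e1 (\<psi> j) * ?e1 a b + inner2 ?e2 (\<psi> j) * ?e2 a b)" if "j \<in> R" for j
    using res4[OF un, of "\<psi> j" p] z that by simp
  have ipco: "inner2 (\<psi> i) (\<psi> j) = ip (co i) (co j)" if "i \<in> R" "j \<in> R" for i j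
  proof -
    have "inner2 (\<psi> i) (\<psi> j) = inner2 (\<psi> i) (\<lambda>a b. inner2 ?e1 (\<psi> j) * ?e1 a b + inner2 ?e2 (\<psi> j) * ?e2 a b)"
      using rep[OF that(2)] by simp
    also have "\<dots> = inner2 ?e1 (\<psi> j) * cnj (inner2 ?e1 (\<psi> i)) + inner2 ?e2 (\<psi> j) * cnj (inner2 ?e2 (\<psi> i))"
      unfolding inner2_comb_right by (simp add: inner2_cnj[of "\<psi> i"])
    also have "\<dots> = ip (co i) (co j)" by (simp add: co_def ip_expand mult.commute)
    finally show ?thesis .
  qed
  have mem: "x \<in> R" "y \<in> R" "w \<in> R" using S xyw by auto
  then have lt: "x < n" "y < n" "w < n" using R by auto
  show False
    by (rule three_orth[of "co x" "co y" "co w"])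
       (simp_all add: ipco[symmetric] mem normalized lt orth xyw)
qed

lemma factor:
  assumes "\<not> entangled \<psi>" "inner2 \<psi> \<psi> = 1"
  shows "\<exists>u v. ip u u = 1 \<and> ip v v = 1 \<and> \<psi> = prodv Alice u v"
proof -
  obtain u v where uv: "\<psi> = (\<lambda>a b. u a * v b)" using assms(1) unfolding entangled_def is_product_def by blast
  then have psi: "\<psi> = prodv Alice u v" by (simp add: prodv_def)
  have 1: "ip u u * ip v v = 1" using assms(2) psi inner2_prod[of Alice u v u v] by simp
  then have "ip u u \<noteq> 0" by auto
  from normalize[OF this] obtain c where c: "ip (\<lambda>k. c * u k) (\<lambda>k. c * u k) = 1" by blast
  then have cc: "cnj c * c * ip u u = 1" by (simp add: ip_scale_left ip_scale_right mult.assoc)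
  then have c0: "c \<noteq> 0" by auto
  have "ip (\<lambda>k. inverse c * v k) (\<lambda>k. inverse c * v k) = 1"
  proof -
    have "ip (\<lambda>k. inverse c * v k) (\<lambda>k. inverse c * v k) = inverse (cnj c * c) * ip v v"
      by (simp add: ip_scale_left ip_scale_right)
    also have "\<dots> = ip u u * ip v v" using cc c0
      by (metis mult.assoc inverse_unique)
    finally show ?thesis using 1 by simp
  qed
  moreover have "\<psi> = prodv Alice (\<lambda>k. c * u k) (\<lambda>k. inverse c * v k)"
    using psi c0 by (auto simp: prodv_def field_simps)
  ultimately show ?thesis using c by blast
qed




lemma pair_case:
  fixes n :: nat and \<psi> :: "nat \<Rightarrow> state2"
  assumes normalized: "\<forall>i<n. inner2 (\<psi> i) (\<psi> i) = 1"
    and orth: "\<forall>i<n. \<forall>j<n. i \<noteq> j \<longrightarrow> inner2 (\<psi> i) (\<psi> j) = 0"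
    and pq: "p0 < n" "q0 < n" "p0 \<noteq> q0"
    and hp: "\<psi> p0 = prodv p u v" and hq: "\<psi> q0 = prodv p u' v'"
    and un: "ip u u = 1" "ip v v = 1" "ip u' u' = 1" "ip v' v' = 1"
    and uu': "ip u u' = 0"
  shows "two_copy_distinguishable n \<psi>"
proof -
  define c where "c = ip (perp u) u'"
  have e: "u' = (\<lambda>k. ip u u' * u k + ip (perp u) u' * perp u k)" by (rule res2[OF un(1)])
  have u'eq: "u' = (\<lambda>k. c * perp u k)" by (subst e) (simp add: uu' c_def)
  have c0: "c \<noteq> 0"
  proof
    assume "c = 0"
    then have "u' = (\<lambda>_. 0)" using u'eq by simp
    then show False using un(3) by (simp add: ip_zero_right)
  qed
  have hq': "\<psi> q0 = (\<lambda>a b. c * prodv p (perp u) v' a b)" unfolding hq by (subst u'eq) (rule prodv_scale_left)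
  have K1: "inner2 (prodv p u v) (\<psi> j) = 0" if "j < n" "j \<noteq> p0" for j
  proof -
    have "inner2 (\<psi> p0) (\<psi> j) = 0" using orth pq(1) that by blast
    then show ?thesis by (simp only: hp)
  qed
  have K2: "inner2 (prodv p (perp u) v') (\<psi> j) = 0" if "j < n" "j \<noteq> q0" for j
  proof -
    have "inner2 (\<psi> q0) (\<psi> j) = 0" using orth pq(2) that by blast
    then have "cnj c * inner2 (prodv p (perp u) v') (\<psi> j) = 0" unfolding hq' inner2_scale_left .
    then show ?thesis using c0 by simp
  qed
  define R where "R = {j. j < n \<and> j \<noteq> p0 \<and> j \<noteq> q0}"
  have cardR: "card R \<le> 2"
    by (rule dim2[OF normalized orth un(1) un(2) un(4), of R p]) (auto simp: R_def K1 K2)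
  have fR: "finite R" unfolding R_def by simp
  have pv: "ip (perp v) v = 0" "ip (perp v') v' = 0" "ip (perp u) u = 0" by (simp_all add: ip_perp_self)
  show ?thesis
  proof (rule reduction[OF orth un(1) un(2) un(4), of p])
    have "{j. j < n \<and> inner2 (prodv p u v) (\<psi> j) \<noteq> 0} \<subseteq> {p0}" using K1 by auto
    then show "card {j. j < n \<and> inner2 (prodv p u v) (\<psi> j) \<noteq> 0} \<le> 2"
      by (metis card_mono finite.intros(1) finite_insert is_singleton_altdef is_singleton_def le_trans one_le_numeral)
  next
    have "{j. j < n \<and> inner2 (prodv p (perp u) v') (\<psi> j) \<noteq> 0} \<subseteq> {q0}" using K2 by auto
    then show "card {j. j < n \<and> inner2 (prodv p (perp u) v') (\<psi> j) \<noteq> 0} \<le> 2"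
      by (metis card_mono finite.intros(1) finite_insert is_singleton_altdef is_singleton_def le_trans one_le_numeral)
  next
    have "{j. j < n \<and> inner2 (prodv p u (perp v)) (\<psi> j) \<noteq> 0} \<subseteq> R"
      unfolding R_def using hp hq uu' pv by (auto simp: inner2_prod)
    then show "card {j. j < n \<and> inner2 (prodv p u (perp v)) (\<psi> j) \<noteq> 0} \<le> 2"
      using cardR fR card_mono le_trans by blast
  next
    have "{j. j < n \<and> inner2 (prodv p (perp u) (perp v')) (\<psi> j) \<noteq> 0} \<subseteq> R"
      unfolding R_def using hp hq uu' pv by (auto simp: inner2_prod)
    then show "card {j. j < n \<and> inner2 (prodv p (perp u) (perp v')) (\<psi> j) \<noteq> 0} \<le> 2"
      using cardR fR card_mono le_trans by blast
  qed
qed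

lemma single_case:
  fixes n :: nat and \<psi> :: "nat \<Rightarrow> state2"
  assumes orth: "\<forall>i<n. \<forall>j<n. i \<noteq> j \<longrightarrow> inner2 (\<psi> i) (\<psi> j) = 0"
    and p: "p0 < n" "n \<le> 3"
    and hp: "\<psi> p0 = prodv Alice u v"
    and un: "ip u u = 1" "ip v v = 1"
  shows "two_copy_distinguishable n \<psi>"
proof -
  have K1: "inner2 (prodv Alice u v) (\<psi> j) = 0" if "j < n" "j \<noteq> p0" for j
  proof -
    have "inner2 (\<psi> p0) (\<psi> j) = 0" using orth p(1) that by blast
    then show ?thesis by (simp only: hp)
  qed
  define R where "R = {j. j < n \<and> j \<noteq> p0}"
  have "R = {..<n} - {p0}" unfolding R_def by auto
  then have cardR: "card R \<le> 2" using p by simp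
  have fR: "finite R" unfolding R_def by simp
  have pv: "ip (perp v) v = 0" "ip (perp u) u = 0" by (simp_all add: ip_perp_self)
  show ?thesis
  proof (rule reduction[OF orth un(1) un(2) un(2), of Alice])
    have "{j. j < n \<and> inner2 (prodv Alice u v) (\<psi> j) \<noteq> 0} \<subseteq> {p0}" using K1 by auto
    then show "card {j. j < n \<and> inner2 (prodv Alice u v) (\<psi> j) \<noteq> 0} \<le> 2"
      by (metis card_mono finite.intros(1) finite_insert is_singleton_altdef is_singleton_def le_trans one_le_numeral)
  next
    have "{j. j < n \<and> inner2 (prodv Alice u (perp v)) (\<psi> j) \<noteq> 0} \<subseteq> R"
      unfolding R_def using hp pv by (auto simp: inner2_prod)
    then show "card {j. j < n \<and> inner2 (prodv Alice u (perp v)) (\<psi> j) \<noteq> 0} \<le> 2"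
      using cardR fR card_mono le_trans by blast
  next
    have "{j. j < n \<and> inner2 (prodv Alice (perp u) v) (\<psi> j) \<noteq> 0} \<subseteq> R"
      unfolding R_def using hp pv by (auto simp: inner2_prod)
    then show "card {j. j < n \<and> inner2 (prodv Alice (perp u) v) (\<psi> j) \<noteq> 0} \<le> 2"
      using cardR fR card_mono le_trans by blast
  next
    have "{j. j < n \<and> inner2 (prodv Alice (perp u) (perp v)) (\<psi> j) \<noteq> 0} \<subseteq> R"
      unfolding R_def using hp pv by (auto simp: inner2_prod)
    then show "card {j. j < n \<and> inner2 (prodv Alice (perp u) (perp v)) (\<psi> j) \<noteq> 0} \<le> 2"
      using cardR fR card_mono le_trans by blast
  qed
qed

lemma small_case:
  fixes n :: nat and \<psi> :: "nat \<Rightarrow> state2"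
  assumes orth: "\<forall>i<n. \<forall>j<n. i \<noteq> j \<longrightarrow> inner2 (\<psi> i) (\<psi> j) = 0"
    and n: "n \<le> 2"
  shows "two_copy_distinguishable n \<psi>"
proof -
  define e where "e = (\<lambda>k::bool. if k then (0::complex) else 1)"
  have e: "ip e e = 1" unfolding e_def by (simp add: ip_expand)
  have c: "card {j. j < n \<and> Q j} \<le> 2" for Q
  proof -
    have "card {j. j < n \<and> Q j} \<le> card {..<n}" by (rule card_mono) auto
    then show ?thesis using n by simp
  qed
  show ?thesis by (rule reduction[OF orth e e e, of Alice]) (simp_all add: c)
qed

theorem corollary1:
  fixes n :: nat and \<psi> :: "nat \<Rightarrow> state2"
  assumes normalized: "\<forall>i<n. inner2 (\<psi> i) (\<psi> i) = 1"
    and orthogonal: "\<forall>i<n. \<forall>j<n. i \<noteq> j \<longrightarrow> inner2 (\<psi> i) (\<psi> j) = 0"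
    and few_entangled: "card {i. i < n \<and> entangled (\<psi> i)} \<le> 2"
  shows "two_copy_distinguishable n \<psi>"
proof (cases "n \<le> 2")
  case True
  then show ?thesis using small_case[OF orthogonal] by blast
next
  case False
  define P where "P = {i. i < n \<and> \<not> entangled (\<psi> i)}"
  have "{..<n} \<subseteq> P \<union> {i. i < n \<and> entangled (\<psi> i)}" unfolding P_def by auto
  then have "card {..<n} \<le> card (P \<union> {i. i < n \<and> entangled (\<psi> i)})"
    by (rule card_mono[rotated]) (simp add: P_def)
  also have "\<dots> \<le> card P + card {i. i < n \<and> entangled (\<psi> i)}" by (rule card_Un_le)
  finally have cP: "n \<le> card P + 2" using few_entangled by simp
  have fP: "finite P" unfolding P_def by simp
  have facP: "\<exists>u v. ip u u = 1 \<and> ip v v = 1 \<and> \<psi> i = prodv Alice u v" if "i \<in> P" for i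
    using factor that normalized unfolding P_def by blast
  show ?thesis
  proof (cases "n = 3")
    case True
    then have "card P \<ge> 1" using cP by simp
    then obtain p0 where "p0 \<in> P" using fP by (metis card.empty ex_in_conv not_one_le_zero)
    moreover obtain u v where "ip u u = 1" "ip v v = 1" "\<psi> p0 = prodv Alice u v"
      using facP[OF \<open>p0 \<in> P\<close>] by blast
    ultimately show ?thesis using single_case[OF orthogonal, of p0] True unfolding P_def by auto
  next
    case n3: False
    then have "card P \<ge> 2" using cP False by simp
    then obtain S where S: "S \<subseteq> P" "card S = 2" using obtain_subset_with_card_n by metis
    then obtain p0 q0 where pq: "S = {p0, q0}" "p0 \<noteq> q0" by (meson card_2_iff)
    have inP: "p0 \<in> P" "q0 \<in> P" using S pq by auto
    then have lt: "p0 < n" "q0 < n" unfolding P_def by auto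
    obtain u v where uv: "ip u u = 1" "ip v v = 1" "\<psi> p0 = prodv Alice u v"
      using facP[OF inP(1)] by blast
    obtain u' v' where uv': "ip u' u' = 1" "ip v' v' = 1" "\<psi> q0 = prodv Alice u' v'"
      using facP[OF inP(2)] by blast
    have "inner2 (\<psi> p0) (\<psi> q0) = 0" using orthogonal lt pq by blast
    then have "ip u u' * ip v v' = 0" using uv(3) uv'(3) by (simp add: inner2_prod)
    then have "ip u u' = 0 \<or> ip v v' = 0" by simp
    then show ?thesis
    proof
      assume "ip u u' = 0"
      then show ?thesis using pair_case[OF normalized orthogonal lt pq(2) uv(3) uv'(3) uv(1) uv(2) uv'(1) uv'(2)] by blast
    next
      assume h: "ip v v' = 0"
      have sw: "prodv Alice a b = prodv Bob b a" for a b by (simp add: prodv_def)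
      show ?thesis
        using pair_case[OF normalized orthogonal lt pq(2) uv(3)[unfolded sw] uv'(3)[unfolded sw] uv(2) uv(1) uv'(2) uv'(1) h] .
    qed
  qed
qed

end
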